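(* Let $p$ be a prime and $k$ a field of characteristic $p$. For any $x,y\in X$ and any monomials $u_1,\ldots,u_p$ of $k_0\langle X\rangle$, the coefficient of $(xy)^p$ in $S_p(u_1,\ldots,u_p)$ plus the coefficient of $(yx)^p$ in $S_p(u_1,\ldots,u_p)$ equals $0$.
   Context: $k_0\langle X\rangle$ is the free associative $k$-algebra (without identity) on a countably infinite set $X$; its monomials are the nonempty words in $X$, which form a $k$-basis. $S_p(v_1,\ldots,v_p)=\sum_{\sigma\in\Sigma_p}\prod_{i=1}^p v_{\sigma(i)}$, with $\Sigma_p$ the symmetric group on $p$ letters. *)

theory Defs
  imports "HOL-Computational_Algebra.Primes" "HOL-Library.Countable_Set" "HOL-Combinatorics.Permutations"
begin

text \<open>Elements of the free associative algebra k_0<X> are represented as functions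
  from words (lists over X) to k; a genuine element has finite support contained in the
  nonempty words.\<close>

type_synonym ('x, 'k) falg = "'x list \<Rightarrow> 'k"

definition falg_mult :: "('x, 'k::semiring_0) falg \<Rightarrow> ('x, 'k) falg \<Rightarrow> ('x, 'k) falg"
  (infixl "**" 70) where
  "f ** g = (\<lambda>w. \<Sum>i\<le>length w. f (take i w) * g (drop i w))"

definition monom_w :: "'x list \<Rightarrow> ('x, 'k::{zero,one}) falg" where
  "monom_w u = (\<lambda>w. if w = u then 1 else 0)"

fun falg_prod :: "('x, 'k::semiring_0) falg list \<Rightarrow> ('x, 'k) falg" where
  "falg_prod [] = (\<lambda>_. 0)"
| "falg_prod [f] = f"
| "falg_prod (f # g # fs) = f ** falg_prod (g # fs)"

text \<open>S_p(v_1,...,v_p) = sum over sigma in Sigma_p of v_sigma(1) ... v_sigma(p);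
  arguments indexed by 0..p-1.\<close>
definition S_poly :: "nat \<Rightarrow> (nat \<Rightarrow> ('x, 'k::semiring_0) falg) \<Rightarrow> ('x, 'k) falg" where
  "S_poly p v = (\<lambda>w. \<Sum>\<sigma>\<in>{\<sigma>. \<sigma> permutes {..<p}}. falg_prod (map (\<lambda>i. v (\<sigma> i)) [0..<p]) w)"

end

theory Submission
  imports Defs
begin


lemma monom_mult_pt: "(monom_w a ** monom_w b) w = (monom_w (a @ b) w :: 'k::semiring_1)"
proof -
  have "(monom_w a ** monom_w b) w =
     (\<Sum>i\<le>length w. if i = length a \<and> w = a @ b then (1::'k) else 0)"
    unfolding falg_mult_def monom_w_def
  proof (rule sum.cong[OF refl])
    fix i assume "i \<in> {..length w}"
    show "(if take i w = a then 1 else 0) * (if drop i w = b then 1 else 0) =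
          (if i = length a \<and> w = a @ b then (1::'k) else 0)"
      using \<open>i \<in> {..length w}\<close>
      by (auto simp: min_def)
  qed
  also have "\<dots> = monom_w (a @ b) w"
    by (auto simp: monom_w_def)
  finally show ?thesis .
qed

lemma monom_mult: "monom_w a ** monom_w b = (monom_w (a @ b) :: ('x,'k::semiring_1) falg)"
  using monom_mult_pt by blast

lemma prod_monom: "ws \<noteq> [] \<Longrightarrow> falg_prod (map monom_w ws) = (monom_w (concat ws) :: ('x,'k::semiring_1) falg)"
proof (induction ws)
  case Nil then show ?case by simp
next
  case (Cons a ws)
  show ?case
  proof (cases ws)
    case Nil then show ?thesis by simp
  next
    case (Cons b ws')
    then show ?thesis using Cons.IH by (simp add: monom_mult)
  qed
qed

lemma S_coeff:
  assumes "p > 0"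
  shows "S_poly p (\<lambda>i. (monom_w (u i) :: ('x, 'k::semiring_1) falg)) w
     = of_nat (card {\<sigma>. \<sigma> permutes {..<p} \<and> concat (map (\<lambda>i. u (\<sigma> i)) [0..<p]) = w})"
proof -
  have "S_poly p (\<lambda>i. (monom_w (u i) :: ('x, 'k) falg)) w =
     (\<Sum>\<sigma>\<in>{\<sigma>. \<sigma> permutes {..<p}}. if concat (map (\<lambda>i. u (\<sigma> i)) [0..<p]) = w then 1 else 0)"
    unfolding S_poly_def
  proof (rule sum.cong[OF refl])
    fix \<sigma> :: "nat \<Rightarrow> nat"
    have eq: "falg_prod (map (\<lambda>i. monom_w (u (\<sigma> i)) :: ('x,'k) falg) [0..<p]) = monom_w (concat (map (\<lambda>i. u (\<sigma> i)) [0..<p]))"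
      using assms prod_monom[of "map (\<lambda>i. u (\<sigma> i)) [0..<p]", where 'k='k] by (simp add: comp_def)
    show "falg_prod (map (\<lambda>i. monom_w (u (\<sigma> i)) :: ('x,'k) falg) [0..<p]) w =
      (if concat (map (\<lambda>i. u (\<sigma> i)) [0..<p]) = w then 1 else 0)"
      unfolding eq by (auto simp: monom_w_def)
  qed
  also have "\<dots> = of_nat (card {\<sigma>. \<sigma> permutes {..<p} \<and> concat (map (\<lambda>i. u (\<sigma> i)) [0..<p]) = w})"
    by (simp add: sum.If_cases finite_permutations Int_def conj_commute)
  finally show ?thesis .
qed


definition rr :: "nat \<Rightarrow> nat \<Rightarrow> nat" where
  "rr p = (\<lambda>i. if i < p then Suc i mod p else i)"

lemma rr_pow: "(rr p ^^ k) i = (if i < p then (i + k) mod p else i)"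
  by (induction k) (auto simp: rr_def mod_Suc_eq)

lemma rr_pow_mod: "rr p ^^ m = rr p ^^ (m mod p)"
  by (rule ext) (simp add: rr_pow mod_add_right_eq)

lemma rr_permutes: assumes "p > 0" shows "rr p permutes {..<p}"
proof (rule bij_imp_permutes)
  show "bij_betw (rr p) {..<p} {..<p}"
  proof (rule bij_betw_imageI)
    show "inj_on (rr p) {..<p}"
      by (rule inj_onI) (auto simp: rr_def mod_Suc split: if_splits)
    show "rr p ` {..<p} = {..<p}"
    proof
      show "rr p ` {..<p} \<subseteq> {..<p}" using assms by (auto simp: rr_def)
      show "{..<p} \<subseteq> rr p ` {..<p}"
      proof
        fix j assume j: "j \<in> {..<p}"
        show "j \<in> rr p ` {..<p}"
        proof (cases j)
          case 0 then show ?thesis using assms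
            by (intro image_eqI[of _ _ "p - 1"]) (auto simp: rr_def)
        next
          case (Suc j') then show ?thesis using j
            by (intro image_eqI[of _ _ j']) (auto simp: rr_def)
        qed
      qed
    qed
  qed
qed (simp add: rr_def)

lemma rr_pow_permutes: "p > 0 \<Longrightarrow> rr p ^^ k permutes {..<p}"
  by (induction k) (auto simp: permutes_id intro: permutes_compose rr_permutes)

lemma map_rr: assumes "p > 0" shows "map (rr p) [0..<p] = [1..<p] @ [0]"
proof -
  have "[0..<p] = [0..<p-1] @ [p-1]" using assms
    by (metis Suc_diff_1 upt_Suc_append zero_le)
  then have "map (rr p) [0..<p] = map (rr p) [0..<p-1] @ [rr p (p-1)]" by simp
  also have "map (rr p) [0..<p-1] = map Suc [0..<p-1]"
    by (rule map_cong) (auto simp: rr_def)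
  also have "rr p (p-1) = 0" using assms by (simp add: rr_def)
  also have "map Suc [0..<p-1] = [1..<p]" using assms by (simp add: map_Suc_upt)
  finally show ?thesis .
qed

lemma concat_rot:
  assumes "p > 0"
  shows "concat (map (\<lambda>i. u (\<sigma> (rr p i))) [0..<p]) =
         rotate (length (u (\<sigma> 0))) (concat (map (\<lambda>i. u (\<sigma> i)) [0..<p]))"
proof -
  have "map (\<lambda>i. u (\<sigma> (rr p i))) [0..<p] = map (\<lambda>i. u (\<sigma> i)) (map (rr p) [0..<p])" by simp
  also have "\<dots> = map (\<lambda>i. u (\<sigma> i)) [1..<p] @ [u (\<sigma> 0)]" using map_rr[OF assms] by simp
  finally have 1: "concat (map (\<lambda>i. u (\<sigma> (rr p i))) [0..<p]) = concat (map (\<lambda>i. u (\<sigma> i)) [1..<p]) @ u (\<sigma> 0)" by simp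
  have 2: "concat (map (\<lambda>i. u (\<sigma> i)) [0..<p]) = u (\<sigma> 0) @ concat (map (\<lambda>i. u (\<sigma> i)) [1..<p])"
    using assms by (simp add: upt_conv_Cons)
  show ?thesis unfolding 1 2 by (simp add: rotate_append)
qed

lemma rep_aux: "y # concat (replicate n [x, y]) @ [x] = concat (replicate (Suc n) [y, x])"
proof (induction n)
  case 0 then show ?case by simp
next
  case (Suc n)
  have "y # concat (replicate (Suc n) [x, y]) @ [x] = y # x # (y # concat (replicate n [x, y]) @ [x])" by simp
  also have "\<dots> = concat (replicate (Suc (Suc n)) [y, x])" using Suc by simp
  finally show ?case .
qed

lemma rep_aux2: "concat (replicate n [x, y]) @ [x] = x # concat (replicate n [y, x])"
  by (induction n) auto

lemma rotate1_rep: "p > 0 \<Longrightarrow> rotate1 (concat (replicate p [x, y])) = concat (replicate p [y, x])"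
  by (cases p) (auto simp: rep_aux2)

lemma rotate_rep: "p > 0 \<Longrightarrow> rotate n (concat (replicate p [x, y])) \<in> {concat (replicate p [x, y]), concat (replicate p [y, x])}"
proof (induction n)
  case 0 then show ?case by simp
next
  case (Suc n)
  then show ?case using rotate1_rep[of p x y] rotate1_rep[of p y x]
    by (auto simp: rotate_Suc)
qed


lemma orbit_dvd:
  assumes p: "p > 0" and fin: "finite B" and sub: "\<And>\<sigma>. \<sigma> \<in> B \<Longrightarrow> \<sigma> permutes {..<p}"
    and closed: "\<And>\<sigma>. \<sigma> \<in> B \<Longrightarrow> \<sigma> \<circ> rr p \<in> B"
  shows "p dvd card B"
proof -
  have closedk: "\<sigma> \<circ> (rr p ^^ k) \<in> B" if "\<sigma> \<in> B" for \<sigma> k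
  proof (induction k)
    case 0 then show ?case using that by simp
  next
    case (Suc k)
    have "\<sigma> \<circ> (rr p ^^ Suc k) = (\<sigma> \<circ> (rr p ^^ k)) \<circ> rr p"
      by (simp only: funpow_Suc_right comp_assoc)
    then show ?case using closed[OF Suc] by metis
  qed
  define Ob where "Ob \<sigma> = (\<lambda>k. \<sigma> \<circ> (rr p ^^ k)) ` {..<p}" for \<sigma> :: "nat \<Rightarrow> nat"
  have Oall: "Ob \<sigma> = (\<lambda>k. \<sigma> \<circ> (rr p ^^ k)) ` UNIV" for \<sigma>
  proof
    show "Ob \<sigma> \<subseteq> range (\<lambda>k. \<sigma> \<circ> (rr p ^^ k))" unfolding Ob_def by auto
    show "range (\<lambda>k. \<sigma> \<circ> (rr p ^^ k)) \<subseteq> Ob \<sigma>"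
    proof
      fix \<tau> assume "\<tau> \<in> range (\<lambda>k. \<sigma> \<circ> (rr p ^^ k))"
      then obtain k where "\<tau> = \<sigma> \<circ> (rr p ^^ k)" by auto
      then have "\<tau> = \<sigma> \<circ> (rr p ^^ (k mod p))" using rr_pow_mod[where p=p and m="k"] by simp
      then show "\<tau> \<in> Ob \<sigma>" unfolding Ob_def using p by auto
    qed
  qed
  have Osame: "Ob \<tau> = Ob \<sigma>" if "\<tau> \<in> Ob \<sigma>" for \<sigma> \<tau>
  proof -
    from that obtain k where k: "\<tau> = \<sigma> \<circ> (rr p ^^ k)" unfolding Oall by auto
    have "Ob \<tau> \<subseteq> Ob \<sigma>"
      unfolding Oall k by (auto simp: comp_assoc simp flip: funpow_add)
    moreover have "Ob \<sigma> \<subseteq> Ob \<tau>"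
    proof
      fix \<rho> assume "\<rho> \<in> Ob \<sigma>"
      then obtain j where j: "\<rho> = \<sigma> \<circ> (rr p ^^ j)" unfolding Oall by auto
      have "rr p ^^ k \<circ> rr p ^^ (j + (p - 1) * k) = rr p ^^ (j + p * k)"
      proof -
        have "k + (j + (p - 1) * k) = j + p * k" using p
          by (cases p) (auto simp: algebra_simps)
        then show ?thesis by (metis funpow_add)
      qed
      also have "\<dots> = rr p ^^ j" using rr_pow_mod[where p=p and m="j + p * k"] rr_pow_mod[where p=p and m="j"] by simp
      finally have "\<rho> = \<tau> \<circ> (rr p ^^ (j + (p - 1) * k))" unfolding j k by (simp add: comp_assoc)
      then show "\<rho> \<in> Ob \<tau>" unfolding Oall by auto
    qed
    ultimately show ?thesis by blast
  qed
  have cardO: "card (Ob \<sigma>) = p" if "\<sigma> \<in> B" for \<sigma>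
  proof -
    have "inj_on (\<lambda>k. \<sigma> \<circ> (rr p ^^ k)) {..<p}"
    proof (rule inj_onI)
      fix a b assume a: "a \<in> {..<p}" and b: "b \<in> {..<p}" and eq: "\<sigma> \<circ> (rr p ^^ a) = \<sigma> \<circ> (rr p ^^ b)"
      have "inj \<sigma>" using sub[OF that] permutes_inj by blast
      then have "rr p ^^ a = rr p ^^ b" using eq by (metis fun.inj_map inj_def)
      then have "(rr p ^^ a) 0 = (rr p ^^ b) 0" by simp
      then show "a = b" using a b p by (simp add: rr_pow)
    qed
    then show ?thesis unfolding Ob_def by (simp add: card_image)
  qed
  have OB: "Ob \<sigma> \<subseteq> B" if "\<sigma> \<in> B" for \<sigma>
    unfolding Ob_def using closedk[OF that] by auto
  have self: "\<sigma> \<in> Ob \<sigma>" for \<sigma>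
    unfolding Ob_def using p by (auto intro!: image_eqI[of _ _ 0])
  have U: "\<Union> (Ob ` B) = B" using OB self by blast
  have "p * card (Ob ` B) = card (\<Union> (Ob ` B))"
  proof (rule card_partition)
    show "finite (Ob ` B)" using fin by simp
    show "finite (\<Union> (Ob ` B))" using U fin by simp
    show "\<And>c. c \<in> Ob ` B \<Longrightarrow> card c = p" using cardO by auto
    show "\<And>c1 c2. c1 \<in> Ob ` B \<Longrightarrow> c2 \<in> Ob ` B \<Longrightarrow> c1 \<noteq> c2 \<Longrightarrow> c1 \<inter> c2 = {}"
      using Osame by blast
  qed
  then show ?thesis using U by (metis dvd_triv_left)
qed


theorem lemma5p1:
  fixes p :: nat and x y :: 'x and u :: "nat \<Rightarrow> 'x list"
  assumes "prime p"
    and "CHAR('k::field) = p"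
    and "countable (UNIV :: 'x set)" and "infinite (UNIV :: 'x set)"
    and "\<And>i. i < p \<Longrightarrow> u i \<noteq> []"
  shows "S_poly p (\<lambda>i. (monom_w (u i) :: ('x, 'k) falg)) (concat (replicate p [x, y]))
       + S_poly p (\<lambda>i. (monom_w (u i) :: ('x, 'k) falg)) (concat (replicate p [y, x])) = 0"
proof -
  have p: "p > 0" using assms(1) prime_gt_0_nat by blast
  define W1 where "W1 = concat (replicate p [x, y])"
  define W2 where "W2 = concat (replicate p [y, x])"
  define c where "c \<sigma> = concat (map (\<lambda>i. u (\<sigma> i)) [0..<p])" for \<sigma> :: "nat \<Rightarrow> nat"
  define B1 where "B1 = {\<sigma>. \<sigma> permutes {..<p} \<and> c \<sigma> = W1}"
  define B2 where "B2 = {\<sigma>. \<sigma> permutes {..<p} \<and> c \<sigma> = W2}"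
  define B where "B = {\<sigma>. \<sigma> permutes {..<p} \<and> c \<sigma> \<in> {W1, W2}}"
  have finB: "finite B" unfolding B_def
    by (rule finite_subset[OF _ finite_permutations[of "{..<p}"]]) auto
  have rotW: "rotate n w \<in> {W1, W2}" if "w \<in> {W1, W2}" for n w
    using that rotate_rep[OF p, of n x y] rotate_rep[OF p, of n y x] unfolding W1_def W2_def by auto
  have "p dvd card B"
  proof (rule orbit_dvd[OF p finB])
    show "\<sigma> permutes {..<p}" if "\<sigma> \<in> B" for \<sigma> using that unfolding B_def by auto
    show "\<sigma> \<circ> rr p \<in> B" if "\<sigma> \<in> B" for \<sigma>
    proof -
      have perm: "\<sigma> permutes {..<p}" and cw: "c \<sigma> \<in> {W1, W2}" using that unfolding B_def by auto
      have "(\<sigma> \<circ> rr p) permutes {..<p}" using permutes_compose[OF rr_permutes[OF p] perm] .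
      moreover have "c (\<sigma> \<circ> rr p) = rotate (length (u (\<sigma> 0))) (c \<sigma>)"
        unfolding c_def using concat_rot[OF p, of u \<sigma>] by simp
      ultimately show ?thesis using rotW[OF cw] unfolding B_def by auto
    qed
  qed
  have "p dvd card B1 + card B2"
  proof (cases "W1 = W2")
    case True
    then have "B1 = B" "B2 = B" unfolding B1_def B2_def B_def by auto
    then show ?thesis using \<open>p dvd card B\<close> by simp
  next
    case False
    have "B = B1 \<union> B2" "B1 \<inter> B2 = {}" unfolding B1_def B2_def B_def using False by auto
    moreover have "finite B1" "finite B2" using finB unfolding B1_def B2_def B_def
      by (auto elim: finite_subset[rotated])
    ultimately have "card B = card B1 + card B2" by (simp add: card_Un_disjoint)
    then show ?thesis using \<open>p dvd card B\<close> by simp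
  qed
  then have "(of_nat (card B1 + card B2) :: 'k) = 0"
    using assms(2) of_nat_eq_0_iff_char_dvd[where n="card B1 + card B2", where 'a='k] by simp
  then show ?thesis
    unfolding S_coeff[OF p] B1_def B2_def c_def W1_def W2_def by simp
qed

end
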